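(* Let $\mathbf{P_0},\mathbf{P_1}$ be $n\times n$ transition probability matrices of irreducible and aperiodic Markov chains on $n$ states, let $\mathbf{P_s}=(1-s)\mathbf{P_0}+s\mathbf{P_1}$ for $s\in[0,1]$, and let $\pi_s$ be the stationary distribution of $\mathbf{P_s}$. Then $s\mapsto\pi_s$ is continuous at $s=0$ with respect to the total variation norm. In particular, if $\epsilon>0$, $\sigma$ is the smallest nonzero singular value of $\mathbb{I}-\mathbf{P_0}$, and $\delta=\frac{\epsilon\sigma}{2n^{3/2}}$, then $\|\pi_s-\pi_0\|_{TV}\le\epsilon$ for all $s\in[0,1]$ with $s\le\delta$.
   Context: Distributions are row vectors; $\|\mu-\nu\|_{TV}=\frac12\|\mu-\nu\|_1$. Singular values are with respect to the Euclidean inner product; $\mathbb{I}$ is the identity matrix. *)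

theory Defs
  imports "HOL-Analysis.Analysis"
begin

text \<open>Transition matrices are real matrices indexed by a finite state type 'n
  (n = CARD('n)); distributions are row vectors, acting by v* .\<close>

fun mpow :: "real^'n^'n \<Rightarrow> nat \<Rightarrow> real^'n^'n" where
  "mpow P 0 = mat 1"
| "mpow P (Suc k) = mpow P k ** P"

definition stochastic :: "real^'n^'n \<Rightarrow> bool" where
  "stochastic P \<longleftrightarrow> (\<forall>i j. P $ i $ j \<ge> 0) \<and> (\<forall>i. (\<Sum>j\<in>UNIV. P $ i $ j) = 1)"

definition irreducible_chain :: "real^'n^'n \<Rightarrow> bool" where
  "irreducible_chain P \<longleftrightarrow> (\<forall>i j. \<exists>k. mpow P k $ i $ j > 0)"

definition aperiodic_chain :: "real^'n^'n \<Rightarrow> bool" where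
  "aperiodic_chain P \<longleftrightarrow> (\<forall>i. Gcd {k::nat. k > 0 \<and> mpow P k $ i $ i > 0} = 1)"

definition stationary_dist :: "real^'n^'n \<Rightarrow> real^'n \<Rightarrow> bool" where
  "stationary_dist P \<pi> \<longleftrightarrow> (\<forall>i. \<pi> $ i \<ge> 0) \<and> (\<Sum>i\<in>UNIV. \<pi> $ i) = 1 \<and> \<pi> v* P = \<pi>"

definition tv_dist :: "real^'n \<Rightarrow> real^'n \<Rightarrow> real" where
  "tv_dist \<mu> \<nu> = (1/2) * (\<Sum>i\<in>UNIV. \<bar>\<mu> $ i - \<nu> $ i\<bar>)"

definition singular_value :: "real^'n^'n \<Rightarrow> real \<Rightarrow> bool" where
  "singular_value A \<sigma> \<longleftrightarrow> \<sigma> \<ge> 0 \<and>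
     (\<exists>v. v \<noteq> 0 \<and> (transpose A ** A) *v v = (\<sigma>^2) *\<^sub>R v)"

definition min_nonzero_singular_value :: "real^'n^'n \<Rightarrow> real" where
  "min_nonzero_singular_value A = Min {\<sigma>. \<sigma> \<noteq> 0 \<and> singular_value A \<sigma>}"

end

theory Submission
  imports Defs
begin

lemma l1_le_sqrt_norm:
  fixes x :: "real^'n"
  shows "(\<Sum>i\<in>UNIV. \<bar>x$i\<bar>) \<le> sqrt (real CARD('n)) * norm x"
proof -
  have "(\<Sum>i\<in>UNIV. \<bar>x$i\<bar>)\<^sup>2 \<le> (\<Sum>i\<in>UNIV. \<bar>x$i\<bar>\<^sup>2) * real CARD('n)"
    using sum_squared_le_sum_of_squares[of "\<lambda>i. \<bar>x$i\<bar>" UNIV] by simp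
  also have "(\<Sum>i\<in>UNIV. \<bar>x$i\<bar>\<^sup>2) = (norm x)\<^sup>2"
    unfolding power2_norm_eq_inner inner_vec_def by (simp add: power2_eq_square)
  finally have "(\<Sum>i\<in>UNIV. \<bar>x$i\<bar>)\<^sup>2 \<le> (sqrt (real CARD('n)) * norm x)\<^sup>2"
    by (simp add: power_mult_distrib mult.commute)
  then show ?thesis
    by (rule power2_le_imp_le) simp
qed

lemma quad_nonneg_imp_zero:
  fixes a b :: real
  assumes "\<And>t. 0 \<le> 2*t*a + t\<^sup>2 * b"
  shows "a = 0"
proof (rule ccontr)
  assume a: "a \<noteq> 0"
  define c where "c = \<bar>b\<bar> + 1"
  have pos: "c > 0" "c > b" "c \<ge> 1" unfolding c_def by auto
  define t where "t = - a / c"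
  have e: "t * c = - a" unfolding t_def using pos by simp
  have "0 \<le> (2*t*a + t\<^sup>2 * b) * c" using assms[of t] pos by simp
  also have "(2*t*a + t\<^sup>2 * b) * c = 2*a*(t*c) + t * b * (t*c)"
    by (simp add: power2_eq_square algebra_simps)
  also have "\<dots> = -2*a*a - t*b*a" using e by simp
  finally have h: "0 \<le> -2*a*a - t*b*a" .
  have "(-2*a*a - t*b*a)*c = -2*a*a*c - b*a*(t*c)" by (simp add: algebra_simps)
  also have "\<dots> = a*a*(b - 2*c)" using e by (simp add: algebra_simps)
  finally have eq: "(-2*a*a - t*b*a)*c = a*a*(b - 2*c)" .
  have "a*a > 0" using a by (auto simp: zero_less_mult_iff linorder_neq_iff)
  moreover have "b - 2*c < 0" using pos by simp
  ultimately have "a*a*(b - 2*c) < 0" by (rule mult_pos_neg)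
  moreover have "0 \<le> (-2*a*a - t*b*a)*c" using h pos by simp
  ultimately show False using eq by simp
qed

lemma symm_dot:
  fixes A :: "real^'n^'n"
  shows "((transpose A ** A) *v x) \<bullet> y = x \<bullet> ((transpose A ** A) *v y)"
proof -
  have t: "transpose (transpose A ** A) = transpose A ** A"
    by (simp add: matrix_transpose_mul)
  have "(transpose A ** A) *v x = x v* transpose (transpose A ** A)"
    by (simp only: vector_transpose_matrix)
  then have "(transpose A ** A) *v x = x v* (transpose A ** A)" by (simp only: t)
  then show ?thesis by (simp add: dot_lmul_matrix)
qed

lemma sv_finite:
  fixes A :: "real^'n^'n"
  shows "finite {\<sigma>. \<sigma> \<noteq> 0 \<and> singular_value A \<sigma>}"
proof -
  define S where "S = {\<sigma>. \<sigma> \<noteq> 0 \<and> singular_value A \<sigma>}"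
  define M where "M = transpose A ** A"
  define f where "f \<sigma> = (SOME v. v \<noteq> 0 \<and> M *v v = (\<sigma>^2) *\<^sub>R v)" for \<sigma>
  have f: "f \<sigma> \<noteq> 0 \<and> M *v f \<sigma> = (\<sigma>^2) *\<^sub>R f \<sigma>" "\<sigma> \<ge> 0" if "\<sigma> \<in> S" for \<sigma>
  proof -
    from that have ex: "\<exists>v. v \<noteq> 0 \<and> M *v v = (\<sigma>^2) *\<^sub>R v" and "\<sigma> \<ge> 0"
      by (auto simp: S_def singular_value_def M_def)
    then show "f \<sigma> \<noteq> 0 \<and> M *v f \<sigma> = (\<sigma>^2) *\<^sub>R f \<sigma>" "\<sigma> \<ge> 0"
      unfolding f_def using someI_ex[OF ex] by auto
  qed
  have sq: "\<sigma>^2 \<noteq> \<tau>^2" if "\<sigma> \<in> S" "\<tau> \<in> S" "\<sigma> \<noteq> \<tau>" for \<sigma> \<tau>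
    using f(2)[OF that(1)] f(2)[OF that(2)] that(3) by (metis power2_eq_iff_nonneg)
  have inj: "inj_on f S"
  proof (rule inj_onI)
    fix \<sigma> \<tau> assume h: "\<sigma> \<in> S" "\<tau> \<in> S" "f \<sigma> = f \<tau>"
    show "\<sigma> = \<tau>"
    proof (rule ccontr)
      assume "\<sigma> \<noteq> \<tau>"
      have "(\<sigma>^2) *\<^sub>R f \<sigma> = (\<tau>^2) *\<^sub>R f \<sigma>" using f(1)[OF h(1)] f(1)[OF h(2)] h(3) by simp
      then have "(\<sigma>^2 - \<tau>^2) *\<^sub>R f \<sigma> = 0" by (simp add: algebra_simps)
      then show False using sq[OF h(1,2) \<open>\<sigma> \<noteq> \<tau>\<close>] f(1)[OF h(1)] by simp
    qed
  qed
  have orth: "f \<sigma> \<bullet> f \<tau> = 0" if "\<sigma> \<in> S" "\<tau> \<in> S" "\<sigma> \<noteq> \<tau>" for \<sigma> \<tau>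
  proof -
    have "\<sigma>^2 * (f \<sigma> \<bullet> f \<tau>) = (M *v f \<sigma>) \<bullet> f \<tau>" using f(1)[OF that(1)] by simp
    also have "\<dots> = f \<sigma> \<bullet> (M *v f \<tau>)" unfolding M_def by (rule symm_dot)
    also have "\<dots> = \<tau>^2 * (f \<sigma> \<bullet> f \<tau>)" using f(1)[OF that(2)] by simp
    finally have "(\<sigma>^2 - \<tau>^2) * (f \<sigma> \<bullet> f \<tau>) = 0" by (simp add: algebra_simps)
    then show ?thesis using sq[OF that] by simp
  qed
  have "pairwise orthogonal (f ` S)"
    unfolding pairwise_def orthogonal_def using orth by auto
  moreover have "0 \<notin> f ` S" using f by auto
  ultimately have "independent (f ` S)" by (rule pairwise_orthogonal_independent)
  then have "finite (f ` S)" by (rule finiteI_independent)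
  then show ?thesis using inj finite_imageD S_def by blast
qed

lemma mpow_nonneg:
  assumes "stochastic P"
  shows "mpow P k $ i $ j \<ge> 0"
proof (induction k arbitrary: j)
  case 0 then show ?case by (simp add: mat_def)
next
  case (Suc k)
  then show ?case using assms unfolding stochastic_def
    by (simp add: matrix_matrix_mult_def sum_nonneg)
qed

lemma invariant_pow:
  assumes "y v* P = y"
  shows "y v* mpow P k = y"
proof (induction k)
  case 0 then show ?case by simp
next
  case (Suc k)
  then show ?case using assms by (simp add: vector_matrix_mul_assoc[symmetric])
qed

lemma pos_part_inv:
  fixes P :: "real^'n^'n"
  assumes st: "stochastic P" and inv: "y v* P = y"
  defines "yp \<equiv> (\<chi> i. max (y$i) 0)"
  shows "yp v* P = yp"
proof -
  have nn: "\<And>i j. P$i$j \<ge> 0" and rs: "\<And>i. (\<Sum>j\<in>UNIV. P$i$j) = 1"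
    using st unfolding stochastic_def by auto
  have ent: "(yp v* P)$j = (\<Sum>i\<in>UNIV. yp$i * P$i$j)" for j
    by (simp add: vector_matrix_mult_def)
  have ge: "(yp v* P)$j \<ge> yp$j" for j
  proof -
    have "(\<Sum>i\<in>UNIV. yp$i * P$i$j) \<ge> (\<Sum>i\<in>UNIV. y$i * P$i$j)"
      by (rule sum_mono) (simp add: yp_def mult_right_mono nn)
    moreover have "(\<Sum>i\<in>UNIV. y$i * P$i$j) = y$j"
    proof -
      have "(\<Sum>i\<in>UNIV. y$i * P$i$j) = (y v* P)$j" by (simp add: vector_matrix_mult_def)
      then show ?thesis using inv by simp
    qed
    moreover have "(\<Sum>i\<in>UNIV. yp$i * P$i$j) \<ge> 0"
      by (rule sum_nonneg) (simp add: yp_def nn)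
    ultimately show ?thesis unfolding ent by (simp add: yp_def)
  qed
  have "(\<Sum>j\<in>UNIV. (yp v* P)$j) = (\<Sum>j\<in>UNIV. \<Sum>i\<in>UNIV. yp$i * P$i$j)"
    by (simp add: ent)
  also have "\<dots> = (\<Sum>i\<in>UNIV. yp$i * (\<Sum>j\<in>UNIV. P$i$j))"
    unfolding sum_distrib_left by (rule sum.swap)
  also have "\<dots> = (\<Sum>i\<in>UNIV. yp$i)" by (simp add: rs)
  finally have "(\<Sum>j\<in>UNIV. (yp v* P)$j - yp$j) = 0" by (simp add: sum_subtractf)
  then have "\<forall>j\<in>UNIV. (yp v* P)$j - yp$j = 0"
    by (subst sum_nonneg_eq_0_iff[symmetric]) (auto simp: ge)
  then show ?thesis by (simp add: vec_eq_iff)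
qed

lemma spread:
  fixes P :: "real^'n^'n"
  assumes st: "stochastic P" and irr: "irreducible_chain P" and inv: "y v* P = y"
      and pos: "y$i > 0"
  shows "y$j > 0"
proof -
  define yp where "yp = (\<chi> i. max (y$i) 0)"
  have ypinv: "yp v* P = yp" using pos_part_inv[OF st inv] by (simp add: yp_def)
  obtain k where k: "mpow P k $ i $ j > 0" using irr unfolding irreducible_chain_def by blast
  have "yp$j = (yp v* mpow P k)$j" using invariant_pow[OF ypinv] by simp
  also have "\<dots> = (\<Sum>l\<in>UNIV. yp$l * mpow P k $ l $ j)" by (simp add: vector_matrix_mult_def)
  also have "\<dots> \<ge> yp$i * mpow P k $ i $ j"
    by (rule member_le_sum) (auto simp: yp_def mpow_nonneg[OF st])
  finally have "yp$j \<ge> yp$i * mpow P k $ i $ j" .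
  moreover have "yp$i * mpow P k $ i $ j > 0" using pos k by (simp add: yp_def)
  ultimately have "yp$j > 0" by linarith
  then show ?thesis by (simp add: yp_def)
qed

lemma uniq_zero:
  fixes P :: "real^'n^'n"
  assumes st: "stochastic P" and irr: "irreducible_chain P" and inv: "x v* P = x"
      and s0: "(\<Sum>i\<in>UNIV. x$i) = 0"
  shows "x = 0"
proof (rule ccontr)
  assume "x \<noteq> 0"
  then obtain i where "x$i \<noteq> 0" by (auto simp: vec_eq_iff)
  then consider "x$i > 0" | "(-x)$i > 0" by (cases "x$i > 0") auto
  then show False
  proof cases
    case 1
    then have "\<forall>j. x$j > 0" using spread[OF st irr inv] by blast
    then have "(\<Sum>j\<in>UNIV. x$j) > 0" by (simp add: sum_pos)
    then show False using s0 by simp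
  next
    case 2
    have inv2: "(-x) v* P = -x" using inv by (simp add: vector_matrix_mult_def sum_negf vec_eq_iff)
    have "\<forall>j. (-x)$j > 0" using spread[OF st irr inv2 2] by blast
    then have "(\<Sum>j\<in>UNIV. (-x)$j) > 0" by (simp add: sum_pos)
    then show False using s0 by (simp add: sum_negf)
  qed
qed

lemma norm_add_scale_sq:
  fixes a b :: "'a::real_inner"
  shows "(norm (a + t *\<^sub>R b))\<^sup>2 = (norm a)\<^sup>2 + 2*t*(a \<bullet> b) + t\<^sup>2 * (norm b)\<^sup>2"
  unfolding power2_norm_eq_inner
  by (simp add: inner_add_left inner_add_right inner_commute power2_eq_square algebra_simps)

lemma lin_aux:
  fixes m t X W Y V Z :: real
  assumes "m * (1 + 2*t*X + t\<^sup>2 * W) \<le> m + 2*t*Y + t\<^sup>2 * V" "Z = Y - m * X"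
  shows "0 \<le> 2*t*Z + t\<^sup>2 * (V - m * W)"
proof -
  have "m + 2*t*Y + t\<^sup>2 * V - m * (1 + 2*t*X + t\<^sup>2 * W) = 2*t*Z + t\<^sup>2 * (V - m * W)"
    unfolding assms(2) by (simp add: algebra_simps)
  then show ?thesis using assms(1) by linarith
qed

lemma unit_in:
  fixes y p :: "real^'n"
  assumes "y \<bullet> p = 0" "y \<noteq> 0"
  shows "(1 / norm y) *\<^sub>R y \<in> {y. p \<bullet> y = 0} \<inter> sphere 0 1"
proof -
  have "p \<bullet> y = 0" using assms(1) inner_commute by metis
  then show ?thesis using assms(2) by (simp add: inner_scaleR_right)
qed

lemma var_sv:
  fixes A :: "real^'n^'n" and p v :: "real^'n"
  assumes pA: "p v* A = 0"
      and nz: "\<And>y. y \<bullet> p = 0 \<Longrightarrow> y v* A = 0 \<Longrightarrow> y = 0"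
      and vp: "v \<bullet> p = 0" and v0: "v \<noteq> 0"
  shows "\<exists>\<sigma>. \<sigma> > 0 \<and> singular_value A \<sigma> \<and> \<sigma> * norm v \<le> norm (v v* A)"
proof -
  define T where "T = {y. p \<bullet> y = 0} \<inter> sphere (0::real^'n) 1"
  define q where "q y = (norm (transpose A *v y))\<^sup>2" for y
  have qv: "q y = (norm (y v* A))\<^sup>2" for y by (simp add: q_def)
  have "compact T" unfolding T_def by (intro closed_Int_compact closed_hyperplane compact_sphere)
  moreover have "T \<noteq> {}"
  proof -
    have "(1 / norm v) *\<^sub>R v \<in> T" unfolding T_def by (rule unit_in[OF vp v0])
    then show ?thesis by blast
  qed
  moreover have "continuous_on T q" unfolding q_def by (intro continuous_intros)
  ultimately obtain y0 where y0T: "y0 \<in> T" and y0min: "\<And>y. y \<in> T \<Longrightarrow> q y0 \<le> q y"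
    using continuous_attains_inf[of T q] by auto
  define \<mu> where "\<mu> = q y0"
  have y0p: "y0 \<bullet> p = 0" and y0n: "norm y0 = 1" using y0T inner_commute[of y0 p] by (auto simp: T_def)
  have hom: "\<mu> * (norm y)\<^sup>2 \<le> q y" if "y \<bullet> p = 0" for y
  proof (cases "y = 0")
    case True then show ?thesis by (simp add: q_def)
  next
    case False
    have "(1 / norm y) *\<^sub>R y \<in> T" unfolding T_def by (rule unit_in[OF that False])
    then have "\<mu> \<le> q ((1 / norm y) *\<^sub>R y)" using y0min \<mu>_def by blast
    also have "\<dots> = q y / (norm y)\<^sup>2"
      by (simp add: qv scaleR_vector_matrix_assoc power_divide)
    finally show ?thesis using False by (simp add: pos_le_divide_eq)
  qed
  define u where "u = y0 v* A"
  have u0: "u \<noteq> 0"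
  proof
    assume "u = 0"
    then have "y0 = 0" using nz[OF y0p] unfolding u_def by blast
    then show False using y0n by simp
  qed
  have \<mu>u: "\<mu> = (norm u)\<^sup>2" unfolding \<mu>_def qv u_def ..
  have \<mu>pos: "\<mu> > 0" using u0 unfolding \<mu>u by simp
  define w where "w = A *v u - \<mu> *\<^sub>R y0"
  have wp: "w \<bullet> p = 0"
  proof -
    have "(A *v u) \<bullet> p = 0"
    proof -
      have "(A *v u) \<bullet> p = p \<bullet> (A *v u)" by (rule inner_commute)
      also have "\<dots> = (p v* A) \<bullet> u" by (rule dot_lmul_matrix[symmetric])
      finally show ?thesis using pA by simp
    qed
    then show ?thesis by (simp add: w_def inner_diff_left y0p)
  qed
  have "\<forall>t. 0 \<le> 2*t*(w \<bullet> w) + t\<^sup>2 * ((norm (w v* A))\<^sup>2 - \<mu> * (norm w)\<^sup>2)"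
  proof
    fix t :: real
    have "(y0 + t *\<^sub>R w) \<bullet> p = 0" using y0p wp by (simp add: inner_add_left)
    then have h1: "\<mu> * (norm (y0 + t *\<^sub>R w))\<^sup>2 \<le> q (y0 + t *\<^sub>R w)"
      by (rule hom)
    have d: "(y0 + t *\<^sub>R w) v* A = u + t *\<^sub>R (w v* A)"
      by (simp add: u_def vector_matrix_left_distrib scaleR_vector_matrix_assoc)
    have "\<mu> * (norm (y0 + t *\<^sub>R w))\<^sup>2 \<le> (norm (u + t *\<^sub>R (w v* A)))\<^sup>2"
      using h1 unfolding qv d .
    then have "\<mu> * (1 + 2*t*(y0 \<bullet> w) + t\<^sup>2 * (norm w)\<^sup>2)
        \<le> \<mu> + 2*t*(u \<bullet> (w v* A)) + t\<^sup>2 * (norm (w v* A))\<^sup>2"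
      unfolding norm_add_scale_sq y0n \<mu>u by simp
    moreover have "u \<bullet> (w v* A) = w \<bullet> (A *v u)"
      using inner_commute dot_lmul_matrix by metis
    moreover have "w \<bullet> w = w \<bullet> (A *v u) - \<mu> * (y0 \<bullet> w)"
    proof -
      have "w \<bullet> w = w \<bullet> (A *v u - \<mu> *\<^sub>R y0)" by (simp add: w_def)
      also have "\<dots> = w \<bullet> (A *v u) - \<mu> * (w \<bullet> y0)" by (simp add: inner_diff_right)
      also have "w \<bullet> y0 = y0 \<bullet> w" by (rule inner_commute)
      finally show ?thesis .
    qed
    ultimately show "0 \<le> 2*t*(w \<bullet> w) + t\<^sup>2 * ((norm (w v* A))\<^sup>2 - \<mu> * (norm w)\<^sup>2)"
      using lin_aux[of \<mu> t "y0 \<bullet> w" "(norm w)\<^sup>2" "w \<bullet> (A *v u)" "(norm (w v* A))\<^sup>2" "w \<bullet> w"]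
      by simp
  qed
  then have "w \<bullet> w = 0" using quad_nonneg_imp_zero by blast
  then have Au: "A *v u = \<mu> *\<^sub>R y0" by (simp add: w_def)
  have "(transpose A ** A) *v u = transpose A *v (A *v u)" by (simp add: matrix_vector_mul_assoc)
  also have "\<dots> = \<mu> *\<^sub>R u" unfolding Au by (simp add: u_def scaleR_vector_matrix_assoc)
  finally have eig: "(transpose A ** A) *v u = ((sqrt \<mu>)^2) *\<^sub>R u" using \<mu>pos by simp
  have sv: "singular_value A (sqrt \<mu>)" unfolding singular_value_def using eig u0 \<mu>pos by auto
  have "(sqrt \<mu> * norm v)\<^sup>2 \<le> (norm (v v* A))\<^sup>2"
    using hom[OF vp] \<mu>pos by (simp add: power_mult_distrib qv)
  then have "sqrt \<mu> * norm v \<le> norm (v v* A)" by (rule power2_le_imp_le) simp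
  then show ?thesis using sv \<mu>pos by (intro exI[of _ "sqrt \<mu>"]) auto
qed

lemma dist_step:
  fixes P :: "real^'n^'n" and x :: "real^'n"
  assumes st: "stochastic P" and nn: "\<And>i. x$i \<ge> 0"
  shows "\<And>j. (x v* P)$j \<ge> 0" and "(\<Sum>j\<in>UNIV. (x v* P)$j) = (\<Sum>i\<in>UNIV. x$i)"
proof -
  have pn: "\<And>i j. P$i$j \<ge> 0" and rs: "\<And>i. (\<Sum>j\<in>UNIV. P$i$j) = 1"
    using st unfolding stochastic_def by auto
  show "\<And>j. (x v* P)$j \<ge> 0"
    by (simp add: vector_matrix_mult_def sum_nonneg nn pn)
  have "(\<Sum>j\<in>UNIV. (x v* P)$j) = (\<Sum>j\<in>UNIV. \<Sum>i\<in>UNIV. x$i * P$i$j)"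
    by (simp add: vector_matrix_mult_def)
  also have "\<dots> = (\<Sum>i\<in>UNIV. x$i * (\<Sum>j\<in>UNIV. P$i$j))"
    unfolding sum_distrib_left by (rule sum.swap)
  also have "\<dots> = (\<Sum>i\<in>UNIV. x$i)" by (simp add: rs)
  finally show "(\<Sum>j\<in>UNIV. (x v* P)$j) = (\<Sum>i\<in>UNIV. x$i)" .
qed

lemma diff_norm_le2:
  fixes P Q :: "real^'n^'n" and x :: "real^'n"
  assumes "stochastic P" "stochastic Q" "\<And>i. x$i \<ge> 0" "(\<Sum>i\<in>UNIV. x$i) = 1"
  shows "norm (x v* Q - x v* P) \<le> 2"
proof -
  have "norm (x v* Q - x v* P) \<le> (\<Sum>j\<in>UNIV. \<bar>(x v* Q - x v* P)$j\<bar>)" by (rule norm_le_l1_cart)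
  also have "\<dots> \<le> (\<Sum>j\<in>UNIV. (x v* Q)$j + (x v* P)$j)"
  proof (rule sum_mono)
    fix j
    show "\<bar>(x v* Q - x v* P)$j\<bar> \<le> (x v* Q)$j + (x v* P)$j"
      using dist_step(1)[OF assms(1,3), of j] dist_step(1)[OF assms(2,3), of j] by simp
  qed
  also have "\<dots> = 2"
    using dist_step(2)[OF assms(1,3)] dist_step(2)[OF assms(2,3)] assms(4)
    by (simp add: sum.distrib)
  finally show ?thesis .
qed

lemma sum_abs_le_norm_sqrt:
  fixes x :: "real^'n"
  shows "\<bar>\<Sum>i\<in>UNIV. x$i\<bar> \<le> sqrt (real CARD('n)) * norm x"
  using sum_abs[of "\<lambda>i. x$i" UNIV] l1_le_sqrt_norm[of x] by linarith

lemma key_bound: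
  fixes P0 P1 :: "real^'n^'n" and \<pi>0 \<pi>s :: "real^'n" and s :: real
  assumes st0: "stochastic P0" and irr0: "irreducible_chain P0" and st1: "stochastic P1"
      and s01: "s \<in> {0..1}"
      and sd0: "stationary_dist P0 \<pi>0"
      and sds: "stationary_dist ((1 - s) *\<^sub>R P0 + s *\<^sub>R P1) \<pi>s"
  shows "\<pi>s - \<pi>0 = 0 \<or> (\<exists>\<sigma>. \<sigma> \<noteq> 0 \<and> singular_value (mat 1 - P0) \<sigma> \<and> \<sigma> > 0 \<and>
            \<sigma> * norm (\<pi>s - \<pi>0) \<le> (1 + sqrt (real CARD('n))) * (2 * s))"
proof -
  define A where "A = mat 1 - P0"
  define d where "d = \<pi>s - \<pi>0"
  have p0nn: "\<And>i. \<pi>0$i \<ge> 0" and p0s: "(\<Sum>i\<in>UNIV. \<pi>0$i) = 1" and p0i: "\<pi>0 v* P0 = \<pi>0"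
    using sd0 unfolding stationary_dist_def by auto
  have psnn: "\<And>i. \<pi>s$i \<ge> 0" and pss: "(\<Sum>i\<in>UNIV. \<pi>s$i) = 1"
     and psi: "\<pi>s v* ((1 - s) *\<^sub>R P0 + s *\<^sub>R P1) = \<pi>s"
    using sds unfolding stationary_dist_def by auto
  have xA: "x v* A = x - x v* P0" for x
    by (simp add: A_def vector_matrix_mult_diff_rdistrib)
  have pA: "\<pi>0 v* A = 0" using p0i by (simp add: xA)
  have uniq: "x = (\<Sum>i\<in>UNIV. x$i) *\<^sub>R \<pi>0" if "x v* A = 0" for x
  proof -
    define y where "y = x - (\<Sum>i\<in>UNIV. x$i) *\<^sub>R \<pi>0"
    have xi: "x v* P0 = x" using that by (simp add: xA)
    have "y v* P0 = y"
      by (simp add: y_def vector_matrix_mult_diff_distrib scaleR_vector_matrix_assoc xi p0i)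
    moreover have "(\<Sum>i\<in>UNIV. y$i) = 0"
      by (simp add: y_def sum_subtractf sum_distrib_left[symmetric] p0s)
    ultimately have "y = 0" using uniq_zero[OF st0 irr0] by blast
    then show ?thesis by (simp add: y_def)
  qed
  have p0n0: "\<pi>0 \<noteq> 0" using p0s by auto
  have nz: "y = 0" if "y \<bullet> \<pi>0 = 0" "y v* A = 0" for y
  proof -
    define c where "c = (\<Sum>i\<in>UNIV. y$i)"
    have yc: "y = c *\<^sub>R \<pi>0" using uniq[OF that(2)] by (simp add: c_def)
    have "c * (\<pi>0 \<bullet> \<pi>0) = 0" using that(1) unfolding yc by simp
    then have "c = 0" using p0n0 by simp
    then show ?thesis using yc by simp
  qed
  have sd: "(\<Sum>i\<in>UNIV. d$i) = 0" by (simp add: d_def sum_subtractf pss p0s)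
  define c where "c = (d \<bullet> \<pi>0) / (\<pi>0 \<bullet> \<pi>0)"
  define v where "v = d - c *\<^sub>R \<pi>0"
  have vp: "v \<bullet> \<pi>0 = 0" using p0n0 by (simp add: v_def c_def inner_diff_left)
  show ?thesis
  proof (cases "v = 0")
    case True
    then have dc: "d = c *\<^sub>R \<pi>0" by (simp add: v_def)
    then have "c = 0" using sd by (simp add: sum_distrib_left[symmetric] p0s)
    then show ?thesis using dc d_def by simp
  next
    case False
    obtain \<sigma> where \<sigma>: "\<sigma> > 0" "singular_value A \<sigma>" "\<sigma> * norm v \<le> norm (v v* A)"
      using var_sv[OF pA nz vp False] by blast
    define w where "w = \<pi>s v* P1 - \<pi>s v* P0"
    have wn: "norm w \<le> 2" unfolding w_def by (rule diff_norm_le2[OF st0 st1 psnn pss])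
    have "v v* A = d v* A" by (simp add: v_def vector_matrix_mult_diff_distrib scaleR_vector_matrix_assoc pA)
    also have "\<dots> = \<pi>s v* A" by (simp add: d_def vector_matrix_mult_diff_distrib pA)
    also have "\<dots> = \<pi>s v* ((1 - s) *\<^sub>R P0 + s *\<^sub>R P1) - \<pi>s v* P0" by (simp add: xA psi)
    also have "\<dots> = s *\<^sub>R w"
      by (simp add: w_def vector_matrix_mult_add_rdistrib vector_scaleR_matrix_ac algebra_simps)
    finally have vA: "v v* A = s *\<^sub>R w" .
    have s0: "s \<ge> 0" using s01 by simp
    have nvA: "norm (v v* A) \<le> 2 * s" using wn s0 unfolding vA by (simp add: mult_left_mono mult.commute)
    have dvc: "d = v + c *\<^sub>R \<pi>0" by (simp add: v_def)
    have "(\<Sum>i\<in>UNIV. v$i) + c = 0"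
      using sd unfolding dvc by (simp add: sum.distrib sum_distrib_left[symmetric] p0s)
    then have "\<bar>c\<bar> \<le> sqrt (real CARD('n)) * norm v"
      using sum_abs_le_norm_sqrt[of v] by linarith
    moreover have "norm \<pi>0 \<le> 1" using norm_le_l1_cart[of \<pi>0] p0nn p0s by simp
    ultimately have "norm (c *\<^sub>R \<pi>0) \<le> sqrt (real CARD('n)) * norm v"
      by (simp add: mult_le_one order_trans[OF mult_left_le])
    then have "norm d \<le> (1 + sqrt (real CARD('n))) * norm v"
      unfolding dvc using norm_triangle_ineq[of v "c *\<^sub>R \<pi>0"] by (simp add: algebra_simps)
    then have "\<sigma> * norm d \<le> (1 + sqrt (real CARD('n))) * (\<sigma> * norm v)"
      using \<sigma>(1) by (simp add: mult_left_mono mult.left_commute)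
    also have "\<dots> \<le> (1 + sqrt (real CARD('n))) * (2 * s)"
      using \<sigma>(3) nvA by (intro mult_left_mono) auto
    finally show ?thesis using \<sigma> by (auto simp: d_def A_def)
  qed
qed

theorem proposition4:
  fixes P0 P1 :: "real^'n^'n" and \<pi> :: "real \<Rightarrow> real^'n"
  assumes "stochastic P0" "irreducible_chain P0" "aperiodic_chain P0"
      and "stochastic P1" "irreducible_chain P1" "aperiodic_chain P1"
      and "\<And>s. s \<in> {0..1} \<Longrightarrow> stationary_dist ((1 - s) *\<^sub>R P0 + s *\<^sub>R P1) (\<pi> s)"
  shows "(\<forall>\<epsilon>>0. \<exists>\<delta>>0. \<forall>s\<in>{0..1}. s \<le> \<delta> \<longrightarrow> tv_dist (\<pi> s) (\<pi> 0) \<le> \<epsilon>)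
       \<and> (\<forall>\<epsilon>>0. \<forall>s\<in>{0..1}.
            s \<le> \<epsilon> * min_nonzero_singular_value (mat 1 - P0) / (2 * real CARD('n) powr (3/2))
            \<longrightarrow> tv_dist (\<pi> s) (\<pi> 0) \<le> \<epsilon>)"
proof -
  define S where "S = {\<sigma>. \<sigma> \<noteq> 0 \<and> singular_value (mat 1 - P0) \<sigma>}"
  define n where "n = real CARD('n)"
  define r where "r = sqrt n"
  have n1: "n \<ge> 1" unfolding n_def by simp
  have r1: "r \<ge> 1" unfolding r_def using n1 by simp
  have rr: "r * r = n" unfolding r_def using n1 by simp
  have npow: "n powr (3/2) = n * r"
  proof -
    have "n powr (3/2) = n powr (1 + 1/2)" by simp
    also have "\<dots> = n powr 1 * n powr (1/2)" by (rule powr_add)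
    also have "\<dots> = n * r" using n1 by (simp add: r_def powr_half_sqrt)
    finally show ?thesis .
  qed
  have finS: "finite S" unfolding S_def by (rule sv_finite)
  have Spos: "\<sigma> > 0" if "\<sigma> \<in> S" for \<sigma> using that by (auto simp: S_def singular_value_def)
  have sd0: "stationary_dist P0 (\<pi> 0)" using assms(7)[of 0] by simp
  have tv0: "tv_dist x x = 0" for x :: "real^'n" by (simp add: tv_dist_def)
  have tvle: "tv_dist x y \<le> (1/2) * r * norm (x - y)" for x y :: "real^'n"
  proof -
    have "(\<Sum>i\<in>UNIV. \<bar>x$i - y$i\<bar>) \<le> r * norm (x - y)"
      using l1_le_sqrt_norm[of "x - y"] by (simp add: r_def n_def)
    then show ?thesis by (simp add: tv_dist_def)
  qed
  have kb: "\<pi> s - \<pi> 0 = 0 \<or> (\<exists>\<sigma>\<in>S. \<sigma> * norm (\<pi> s - \<pi> 0) \<le> (1 + r) * (2 * s))"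
    if "s \<in> {0..1}" for s
    using key_bound[OF assms(1,2,4) that sd0 assms(7)[OF that]] unfolding S_def r_def n_def by blast
  have part2: "tv_dist (\<pi> s) (\<pi> 0) \<le> \<epsilon>"
    if e: "\<epsilon> > 0" and s: "s \<in> {0..1}" and sle: "s \<le> \<epsilon> * Min S / (2 * n powr (3/2))" for \<epsilon> s
  proof (cases "\<pi> s - \<pi> 0 = 0")
    case True
    then show ?thesis using e tv0 by simp
  next
    case False
    then obtain \<sigma> where \<sigma>S: "\<sigma> \<in> S" and b: "\<sigma> * norm (\<pi> s - \<pi> 0) \<le> (1 + r) * (2 * s)"
      using kb[OF s] by blast
    have SnE: "S \<noteq> {}" using \<sigma>S by blast
    define m where "m = Min S"
    have mS: "m \<in> S" unfolding m_def using finS SnE by simp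
    have mpos: "m > 0" using Spos[OF mS] .
    have ms: "m \<le> \<sigma>" unfolding m_def using finS \<sigma>S by simp
    have s0: "s \<ge> 0" using s by simp
    have "m * norm (\<pi> s - \<pi> 0) \<le> \<sigma> * norm (\<pi> s - \<pi> 0)"
      using ms by (simp add: mult_right_mono)
    also note b
    finally have b2: "m * norm (\<pi> s - \<pi> 0) \<le> (1 + r) * (2 * s)" .
    have sle2: "s * (2 * (n * r)) \<le> \<epsilon> * m"
      using sle n1 r1 unfolding npow m_def by (simp add: pos_le_divide_eq)
    have "m * tv_dist (\<pi> s) (\<pi> 0) \<le> m * ((1/2) * r * norm (\<pi> s - \<pi> 0))"
      using tvle mpos by (simp add: mult_left_mono)
    also have "\<dots> = (1/2) * r * (m * norm (\<pi> s - \<pi> 0))" by simp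
    also have "\<dots> \<le> (1/2) * r * ((1 + r) * (2 * s))"
      using b2 r1 by (intro mult_left_mono) auto
    also have "\<dots> = (r + n) * s" using rr by (simp add: algebra_simps)
    also have "\<dots> \<le> (2 * (n * r)) * s"
    proof -
      have "r \<le> n * r" using r1 n1 by simp
      moreover have "n \<le> n * r" using r1 n1 by simp
      ultimately show ?thesis using s0 by (intro mult_right_mono) auto
    qed
    also have "\<dots> \<le> \<epsilon> * m" using sle2 by (simp add: mult.commute)
    finally have "m * tv_dist (\<pi> s) (\<pi> 0) \<le> m * \<epsilon>" by (simp add: mult.commute)
    then show ?thesis using mpos by simp
  qed
  show ?thesis
  proof (intro conjI allI impI ballI)
    fix \<epsilon> s :: real
    assume "\<epsilon> > 0" "s \<in> {0..1}"
      "s \<le> \<epsilon> * min_nonzero_singular_value (mat 1 - P0) / (2 * real CARD('n) powr (3/2))"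
    then show "tv_dist (\<pi> s) (\<pi> 0) \<le> \<epsilon>"
      using part2 unfolding min_nonzero_singular_value_def S_def n_def by blast
  next
    fix \<epsilon> :: real
    assume e: "\<epsilon> > 0"
    show "\<exists>\<delta>>0. \<forall>s\<in>{0..1}. s \<le> \<delta> \<longrightarrow> tv_dist (\<pi> s) (\<pi> 0) \<le> \<epsilon>"
    proof (cases "S = {}")
      case True
      have "tv_dist (\<pi> s) (\<pi> 0) \<le> \<epsilon>" if "s \<in> {0..1}" for s
      proof -
        have "\<pi> s - \<pi> 0 = 0" using kb[OF that] True by blast
        then show ?thesis using tv0 e by simp
      qed
      then show ?thesis by (intro exI[of _ 1]) auto
    next
      case False
      have "Min S > 0" using Spos finS False by simp
      moreover have "n powr (3/2) > 0" using n1 by simp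
      ultimately have "\<epsilon> * Min S / (2 * n powr (3/2)) > 0" using e by simp
      then show ?thesis using part2 e by blast
    qed
  qed
qed

end
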